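(* Let $m\geqslant 2$ and let $\theta_1,\dots,\theta_m\in\mathbb{R}$. Assume that there exist indices $i,j$ with $1\leqslant i<j\leqslant m$ such that $1,\theta_i,\theta_j$ are linearly independent over $\mathbb{Q}$. Then for every $\varepsilon>0$ and every $\alpha\in\mathbb{R}$ there exist $\pmb{x}=(x_1,\dots,x_m)\in\mathbb{Z}^m\setminus\{\pmb{0}\}$ and $y\in\mathbb{Z}$ such that $$\|\theta_1x_1+\dots+\theta_mx_m-\alpha\|<\frac{\varepsilon}{|\pmb{x}|}.$$
   Context: For $w\in\mathbb{R}$, $\|w\|=\min_{a\in\mathbb{Z}}|w-a|$ denotes the distance to the nearest integer. For $\pmb{x}\in\mathbb{R}^m$, $|\pmb{x}|=\max_{1\leqslant k\leqslant m}|x_k|$ is the sup-norm. (The integer $y$ is the integer nearest to $\theta_1x_1+\dots+\theta_mx_m-\alpha$, so that $|\theta_1x_1+\dots+\theta_mx_m-y-\alpha|=\|\theta_1x_1+\dots+\theta_mx_m-\alpha\|$.) *)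

theory Defs
  imports Complex_Main
begin

definition dist_int :: "real \<Rightarrow> real" where
  "dist_int w = Inf ((\<lambda>a::int. \<bar>w - of_int a\<bar>) ` UNIV)"

definition supnorm :: "nat \<Rightarrow> (nat \<Rightarrow> int) \<Rightarrow> real" where
  "supnorm m x = Max ((\<lambda>k. real_of_int \<bar>x k\<bar>) ` {1..m})"

definition lin_indep_Q3 :: "real \<Rightarrow> real \<Rightarrow> real \<Rightarrow> bool" where
  "lin_indep_Q3 u v w \<longleftrightarrow>
     (\<forall>a\<in>\<rat>. \<forall>b\<in>\<rat>. \<forall>c\<in>\<rat>. a * u + b * v + c * w = 0 \<longrightarrow> a = 0 \<and> b = 0 \<and> c = 0)"

end

theory Submission
  imports Defs
begin

lemma dist_int_round: "dist_int w = \<bar>w - of_int (round w)\<bar>"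
  unfolding dist_int_def
  by (rule cInf_eq_minimum) (auto simp: round_diff_minimal)

lemma dist_int_le: "dist_int w \<le> \<bar>w - of_int z\<bar>"
  unfolding dist_int_round by (rule round_diff_minimal)

lemma floor_div_approx:
  fixes t e :: real
  assumes "e \<noteq> 0"
  shows "\<bar>t - of_int \<lfloor>t/e\<rfloor> * e\<bar> < \<bar>e\<bar>"
    and "\<bar>real_of_int \<lfloor>t/e\<rfloor>\<bar> \<le> \<bar>t\<bar>/\<bar>e\<bar> + 1"
proof -
  define n where "n = \<lfloor>t/e\<rfloor>"
  have h1: "0 \<le> t/e - n" "t/e - n < 1" unfolding n_def by linarith+
  have "t - n * e = e * (t/e - n)" using assms by (simp add: field_simps)
  then have "\<bar>t - n * e\<bar> = \<bar>e\<bar> * (t/e - n)" using h1 by (simp add: abs_mult)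
  also have "\<dots> < \<bar>e\<bar> * 1" using h1 assms by (intro mult_strict_left_mono) auto
  finally show "\<bar>t - of_int \<lfloor>t/e\<rfloor> * e\<bar> < \<bar>e\<bar>" by (simp add: n_def)
  have "\<bar>real_of_int n\<bar> \<le> \<bar>t/e\<bar> + 1" using h1 by linarith
  then show "\<bar>real_of_int \<lfloor>t/e\<rfloor>\<bar> \<le> \<bar>t\<bar>/\<bar>e\<bar> + 1" by (simp add: n_def abs_divide)
qed

lemma dirichlet2:
  fixes u v :: real and Q :: nat
  assumes Q: "Q > 0"
  obtains a b c :: int where "a \<noteq> 0 \<or> b \<noteq> 0" "\<bar>a\<bar> \<le> int Q" "\<bar>b\<bar> \<le> int Q"
    "\<bar>of_int a * u + of_int b * v - of_int c\<bar> < 1 / (real Q)^2"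
proof -
  define S where "S = {0..int Q} \<times> {0..int Q}"
  define L where "L = (\<lambda>p::int\<times>int. of_int (fst p) * u + of_int (snd p) * v)"
  define g where "g = (\<lambda>p. nat \<lfloor>real (Q^2) * frac (L p)\<rfloor>)"
  have gS: "g ` S \<subseteq> {..<Q^2}"
  proof
    fix z assume "z \<in> g ` S"
    then obtain p where z: "z = g p" by auto
    have "frac (L p) < 1" "0 \<le> frac (L p)" by (auto simp: frac_lt_1)
    then have "real (Q^2) * frac (L p) < real (Q^2)" using Q by simp
    then have "\<lfloor>real (Q^2) * frac (L p)\<rfloor> < int (Q^2)" by (simp add: floor_less_iff)
    moreover have "0 \<le> \<lfloor>real (Q^2) * frac (L p)\<rfloor>" by simp
    ultimately have "nat \<lfloor>real (Q^2) * frac (L p)\<rfloor> < Q^2" by linarith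
    then show "z \<in> {..<Q^2}" unfolding z g_def by simp
  qed
  have cS: "card S = (Q+1)^2" unfolding S_def by (simp add: card_cartesian_product power2_eq_square nat_add_distrib)
  have "card (g ` S) \<le> Q^2" using card_mono[OF _ gS] by simp
  also have "\<dots> < card S" unfolding cS using Q by (simp add: power_strict_mono)
  finally have "\<not> inj_on g S" by (rule pigeonhole)
  then obtain p p' where pp: "p \<in> S" "p' \<in> S" "p \<noteq> p'" "g p = g p'"
    unfolding inj_on_def by auto
  define f where "f = frac (L p)"
  define f' where "f' = frac (L p')"
  have f0: "0 \<le> f" "f < 1" "0 \<le> f'" "f' < 1" by (auto simp: f_def f'_def frac_lt_1)
  have "\<lfloor>real (Q^2) * f\<rfloor> = \<lfloor>real (Q^2) * f'\<rfloor>"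
    using pp(4) f0 unfolding g_def f_def f'_def by (simp add: nat_eq_iff2)
  then have "\<bar>real (Q^2) * f - real (Q^2) * f'\<bar> < 1" by linarith
  then have "real (Q^2) * \<bar>f - f'\<bar> < 1" by (simp add: abs_mult right_diff_distrib[symmetric])
  then have fd: "\<bar>f - f'\<bar> < 1 / (real Q)^2" using Q by (simp add: field_simps)
  define a where "a = fst p - fst p'"
  define b where "b = snd p - snd p'"
  define c where "c = \<lfloor>L p\<rfloor> - \<lfloor>L p'\<rfloor>"
  have "f - f' = of_int a * u + of_int b * v - of_int c"
    unfolding f_def f'_def a_def b_def c_def L_def frac_def by (simp add: algebra_simps)
  show ?thesis
  proof
    show "a \<noteq> 0 \<or> b \<noteq> 0" using pp(3) unfolding a_def b_def by (auto simp: prod_eq_iff)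
    show "\<bar>a\<bar> \<le> int Q" "\<bar>b\<bar> \<le> int Q" using pp(1,2) unfolding a_def b_def S_def by auto
    show "\<bar>of_int a * u + of_int b * v - of_int c\<bar> < 1 / (real Q)^2"
      using fd \<open>f - f' = _\<close> by simp
  qed
qed

lemma lin_indep_nz:
  assumes li: "lin_indep_Q3 1 u v" and ab: "a \<noteq> 0 \<or> b \<noteq> 0"
  shows "of_int a * u + of_int b * v - of_int c \<noteq> (0::real)"
proof
  assume "of_int a * u + of_int b * v - of_int c = (0::real)"
  then have "(- of_int c) * 1 + of_int a * u + of_int b * v = (0::real)" by simp
  with li have "of_int a = (0::real) \<and> of_int b = (0::real)"
    unfolding lin_indep_Q3_def by (metis Rats_of_int Rats_minus_iff)
  with ab show False by simp
qed

lemma core: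
  fixes u v \<alpha> \<epsilon> :: real
  assumes li: "lin_indep_Q3 1 u v" and ep: "\<epsilon> > 0"
  shows "\<exists>a b y::int. (a \<noteq> 0 \<or> b \<noteq> 0) \<and>
     max \<bar>real_of_int a\<bar> \<bar>real_of_int b\<bar> * \<bar>of_int a * u + of_int b * v - of_int y - \<alpha>\<bar> < \<epsilon>"
proof -
  define Q2 :: nat where "Q2 = nat \<lceil>128/\<epsilon>^3 + 16/\<epsilon>^2 + 4/\<epsilon>\<rceil> + 1"
  have Q2b: "real Q2 > 128/\<epsilon>^3 + 16/\<epsilon>^2 + 4/\<epsilon>" unfolding Q2_def by linarith
  have p1: "128/\<epsilon>^3 > 0" "16/\<epsilon>^2 > 0" "4/\<epsilon> > 0" using ep by auto
  have Q2a: "real Q2 > 128/\<epsilon>^3" "real Q2 > 16/\<epsilon>^2" "real Q2 > 4/\<epsilon>" using Q2b p1 by linarith+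
  have Q2p: "Q2 > 0" unfolding Q2_def by simp
  have Q2r1: "real Q2 \<ge> 1" using Q2p by simp
  obtain a2 b2 c2 :: int where d2: "a2 \<noteq> 0 \<or> b2 \<noteq> 0" "\<bar>a2\<bar> \<le> int Q2" "\<bar>b2\<bar> \<le> int Q2"
    "\<bar>of_int a2 * u + of_int b2 * v - of_int c2\<bar> < 1 / (real Q2)^2"
    using dirichlet2[OF Q2p] by blast
  define e2 where "e2 = of_int a2 * u + of_int b2 * v - of_int c2"
  define \<eta> where "\<eta> = \<bar>e2\<bar>"
  have e2nz: "e2 \<noteq> 0" unfolding e2_def by (rule lin_indep_nz[OF li d2(1)])
  have \<eta>p: "\<eta> > 0" using e2nz by (simp add: \<eta>_def)
  have \<eta>b: "\<eta> < 1 / (real Q2)^2" using d2(4) by (simp add: \<eta>_def e2_def)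
  define t where "t = \<epsilon>/4"
  have tp: "t > 0" using ep by (simp add: t_def)
  define Q1 :: nat where "Q1 = nat \<lceil>t/\<eta>\<rceil>"
  have tq: "t/\<eta> > 0" using tp \<eta>p by simp
  have Q1a: "real Q1 \<ge> t/\<eta>" "real Q1 < t/\<eta> + 1" unfolding Q1_def using tq by linarith+
  have Q1p: "Q1 > 0" using Q1a tp \<eta>p by (metis divide_pos_pos not_gr0 of_nat_0 leD)
  obtain a1 b1 c1 :: int where d1: "a1 \<noteq> 0 \<or> b1 \<noteq> 0" "\<bar>a1\<bar> \<le> int Q1" "\<bar>b1\<bar> \<le> int Q1"
    "\<bar>of_int a1 * u + of_int b1 * v - of_int c1\<bar> < 1 / (real Q1)^2"
    using dirichlet2[OF Q1p] by blast
  define e1 where "e1 = of_int a1 * u + of_int b1 * v - of_int c1"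
  have e1nz: "e1 \<noteq> 0" unfolding e1_def by (rule lin_indep_nz[OF li d1(1)])
  have e1b: "\<bar>e1\<bar> < 1 / (real Q1)^2" using d1(4) by (simp add: e1_def)
  define \<alpha>0 where "\<alpha>0 = \<alpha> - of_int \<lfloor>\<alpha>\<rfloor>"
  have \<alpha>0b: "\<bar>\<alpha>0\<bar> \<le> 1" unfolding \<alpha>0_def by linarith
  define k where "k = \<lfloor>\<alpha>0/e2\<rfloor>"
  define r where "r = \<alpha>0 - of_int k * e2"
  have rb: "\<bar>r\<bar> < \<eta>" using floor_div_approx(1)[OF e2nz, of \<alpha>0] by (simp add: r_def k_def \<eta>_def)
  have kb0: "\<bar>real_of_int k\<bar> \<le> \<bar>\<alpha>0\<bar>/\<eta> + 1" using floor_div_approx(2)[OF e2nz, of \<alpha>0] by (simp add: k_def \<eta>_def)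
  have "\<bar>\<alpha>0\<bar>/\<eta> \<le> 1/\<eta>" using \<alpha>0b \<eta>p by (simp add: divide_right_mono)
  then have kb: "\<bar>real_of_int k\<bar> \<le> 1/\<eta> + 1" using kb0 by linarith
  define j where "j = \<lfloor>r/e1\<rfloor>"
  have rjb: "\<bar>r - of_int j * e1\<bar> < \<bar>e1\<bar>" using floor_div_approx(1)[OF e1nz, of r] by (simp add: j_def)
  have jb0: "\<bar>real_of_int j\<bar> \<le> \<bar>r\<bar>/\<bar>e1\<bar> + 1" using floor_div_approx(2)[OF e1nz, of r] by (simp add: j_def)
  have "\<bar>r\<bar>/\<bar>e1\<bar> \<le> \<eta>/\<bar>e1\<bar>" using rb e1nz by (simp add: divide_right_mono)
  then have jb: "\<bar>real_of_int j\<bar> \<le> \<eta>/\<bar>e1\<bar> + 1" using jb0 by linarith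
  define a where "a = k * a2 + j * a1"
  define b where "b = k * b2 + j * b1"
  define y where "y = k * c2 + j * c1 - \<lfloor>\<alpha>\<rfloor>"
  have err_eq: "of_int a * u + of_int b * v - of_int y - \<alpha> = - (r - of_int j * e1)"
    unfolding a_def b_def y_def r_def e1_def e2_def \<alpha>0_def by (simp add: algebra_simps)
  have errb: "\<bar>of_int a * u + of_int b * v - of_int y - \<alpha>\<bar> < \<bar>e1\<bar>"
    using err_eq rjb by simp
  have Q2sq: "real Q2 \<le> (real Q2)^2" using Q2r1 by (simp add: power2_eq_square)
  have iQ2: "1 / (real Q2)^2 \<le> 1 / real Q2" using Q2r1 Q2sq by (intro divide_left_mono) auto
  have \<eta>Q: "\<eta> < 1 / real Q2" using \<eta>b iQ2 by linarith
  have iQ2e: "1 / real Q2 < \<epsilon>/4"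
  proof -
    have "4/\<epsilon> < real Q2" using Q2a(3) .
    then show ?thesis using ep Q2p by (simp add: field_simps)
  qed
  have \<eta>1: "\<eta> < 1" using \<eta>Q Q2r1 by (smt (verit) divide_le_eq_1)
  have Q1r: "real Q1 > 0" using Q1p by simp
  have e1Q1: "\<bar>e1\<bar> * real Q1 < 1 / real Q1"
  proof -
    have "\<bar>e1\<bar> * real Q1 < 1 / (real Q1)^2 * real Q1" using e1b Q1r by (intro mult_strict_right_mono) auto
    also have "\<dots> = 1 / real Q1" using Q1r by (simp add: power2_eq_square)
    finally show ?thesis .
  qed
  have invQ1: "1 / real Q1 \<le> \<eta> / t"
  proof -
    have pp: "0 < real Q1 * (t/\<eta>)" using mult_pos_pos[OF Q1r tq] .
    have "1 / real Q1 \<le> 1 / (t/\<eta>)" by (rule divide_left_mono[OF Q1a(1)]) (simp, rule pp)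
    then show ?thesis by simp
  qed
  have \<eta>Q2: "\<eta> / t < \<epsilon>/4"
  proof -
    have "\<eta> / t < (1 / real Q2) / t" using divide_strict_right_mono[OF \<eta>Q tp] .
    also have "\<dots> = 4 / (\<epsilon> * real Q2)" by (simp add: t_def)
    also have "\<dots> < \<epsilon>/4"
    proof -
      have "16/\<epsilon>^2 < real Q2" using Q2a(2) .
      then have "16 < real Q2 * \<epsilon>^2" using ep by (simp add: field_simps)
      then show ?thesis using ep Q2p by (simp add: field_simps power2_eq_square)
    qed
    finally show ?thesis .
  qed
  show ?thesis
  proof (cases "a \<noteq> 0 \<or> b \<noteq> 0")
    case True
    define M where "M = \<bar>real_of_int k\<bar> * real Q2 + \<bar>real_of_int j\<bar> * real Q1"
    have ra: "\<bar>real_of_int a\<bar> \<le> M"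
    proof -
      have "\<bar>real_of_int a\<bar> \<le> \<bar>real_of_int k\<bar> * \<bar>real_of_int a2\<bar> + \<bar>real_of_int j\<bar> * \<bar>real_of_int a1\<bar>"
        unfolding a_def by (simp add: abs_mult[symmetric] abs_triangle_ineq)
      also have "\<dots> \<le> M" unfolding M_def using d2(2) d1(2)
        by (intro add_mono mult_left_mono) auto
      finally show ?thesis .
    qed
    have rb': "\<bar>real_of_int b\<bar> \<le> M"
    proof -
      have "\<bar>real_of_int b\<bar> \<le> \<bar>real_of_int k\<bar> * \<bar>real_of_int b2\<bar> + \<bar>real_of_int j\<bar> * \<bar>real_of_int b1\<bar>"
        unfolding b_def by (simp add: abs_mult[symmetric] abs_triangle_ineq)
      also have "\<dots> \<le> M" unfolding M_def using d2(3) d1(3)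
        by (intro add_mono mult_left_mono) auto
      finally show ?thesis .
    qed
    have mx: "max \<bar>real_of_int a\<bar> \<bar>real_of_int b\<bar> \<le> M" using ra rb' by simp
    have mpos: "max \<bar>real_of_int a\<bar> \<bar>real_of_int b\<bar> > 0" using True by auto
    have "max \<bar>real_of_int a\<bar> \<bar>real_of_int b\<bar> * \<bar>of_int a * u + of_int b * v - of_int y - \<alpha>\<bar>
          < max \<bar>real_of_int a\<bar> \<bar>real_of_int b\<bar> * \<bar>e1\<bar>"
      using errb mpos by (rule mult_strict_left_mono)
    also have "\<dots> \<le> M * \<bar>e1\<bar>" using mx by (simp add: mult_right_mono)
    also have "\<dots> \<le> (1/\<eta> + 1) * real Q2 * \<bar>e1\<bar> + (\<eta>/\<bar>e1\<bar> + 1) * real Q1 * \<bar>e1\<bar>"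
    proof -
      have k1: "\<bar>real_of_int k\<bar> * real Q2 * \<bar>e1\<bar> \<le> (1/\<eta> + 1) * real Q2 * \<bar>e1\<bar>"
        by (intro mult_right_mono) (use kb in auto)
      have j1: "\<bar>real_of_int j\<bar> * real Q1 * \<bar>e1\<bar> \<le> (\<eta>/\<bar>e1\<bar> + 1) * real Q1 * \<bar>e1\<bar>"
        by (intro mult_right_mono) (use jb in auto)
      have "M * \<bar>e1\<bar> = \<bar>real_of_int k\<bar> * real Q2 * \<bar>e1\<bar> + \<bar>real_of_int j\<bar> * real Q1 * \<bar>e1\<bar>"
        by (simp add: M_def distrib_right)
      then show ?thesis using k1 j1 by linarith
    qed
    also have "\<dots> = real Q2 * \<bar>e1\<bar> / \<eta> + real Q2 * \<bar>e1\<bar> + \<eta> * real Q1 + \<bar>e1\<bar> * real Q1"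
      using e1nz \<eta>p by (simp add: field_simps)
    also have "\<dots> < \<epsilon>"
    proof -
      have Q1sq: "(t/\<eta>)^2 \<le> (real Q1)^2" using Q1a(1) tq by (intro power_mono) auto
      have e1b2: "\<bar>e1\<bar> < \<eta>^2 / t^2"
      proof -
        have pp: "0 < (real Q1)^2 * (t/\<eta>)^2" using Q1r tq by (intro mult_pos_pos zero_less_power)
        have "1 / (real Q1)^2 \<le> 1 / (t/\<eta>)^2" by (rule divide_left_mono[OF Q1sq]) (simp, rule pp)
        then show ?thesis using e1b by (simp add: power_divide)
      qed
      have A: "real Q2 * \<bar>e1\<bar> / \<eta> < \<epsilon>/8"
      proof -
        have "real Q2 * \<bar>e1\<bar> / \<eta> < real Q2 * (\<eta>^2 / t^2) / \<eta>"
          using e1b2 Q2p \<eta>p by (intro divide_strict_right_mono mult_strict_left_mono) auto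
        also have "\<dots> = real Q2 * \<eta> / t^2" using \<eta>p by (simp add: power2_eq_square)
        also have "\<dots> \<le> real Q2 * (1 / (real Q2)^2) / t^2" using \<eta>b tp
          by (intro divide_right_mono mult_left_mono) auto
        also have "\<dots> = 16 / (real Q2 * \<epsilon>^2)" using Q2p by (simp add: t_def power2_eq_square field_simps)
        also have "\<dots> < \<epsilon>/8"
        proof -
          have "128/\<epsilon>^3 < real Q2" using Q2a(1) .
          then have "128 < real Q2 * \<epsilon>^3" using ep by (simp add: field_simps)
          then show ?thesis using ep Q2p by (simp add: field_simps power2_eq_square power3_eq_cube)
        qed
        finally show ?thesis .
      qed
      have B: "real Q2 * \<bar>e1\<bar> \<le> real Q2 * \<bar>e1\<bar> / \<eta>"
        using \<eta>1 \<eta>p by (simp add: le_divide_eq mult_left_le)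
      have C: "\<eta> * real Q1 < \<epsilon>/2"
      proof -
        have "\<eta> * real Q1 < \<eta> * (t/\<eta> + 1)" using Q1a(2) \<eta>p by simp
        also have "\<dots> = t + \<eta>" using \<eta>p by (simp add: field_simps)
        finally show ?thesis using \<eta>Q iQ2e by (simp add: t_def)
      qed
      have D: "\<bar>e1\<bar> * real Q1 < \<epsilon>/4" using e1Q1 invQ1 \<eta>Q2 by linarith
      have aux: "x < e/8 \<Longrightarrow> y \<le> x \<Longrightarrow> z < e/2 \<Longrightarrow> w < e/4 \<Longrightarrow> x+y+z+w < (e::real)"
        for x y z w e by linarith
      show ?thesis by (rule aux[OF A B C D])
    qed
    finally show ?thesis using True by blast
  next
    case False
    define y' where "y' = c1 + y"
    have "of_int a1 * u + of_int b1 * v - of_int y' - \<alpha> = e1 + (of_int a * u + of_int b * v - of_int y - \<alpha>)"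
      using False by (simp add: y'_def e1_def)
    then have E: "\<bar>of_int a1 * u + of_int b1 * v - of_int y' - \<alpha>\<bar> < 2 * \<bar>e1\<bar>" using errb by linarith
    have N: "max \<bar>real_of_int a1\<bar> \<bar>real_of_int b1\<bar> \<le> real Q1" using d1(2,3) by linarith
    have "max \<bar>real_of_int a1\<bar> \<bar>real_of_int b1\<bar> * \<bar>of_int a1 * u + of_int b1 * v - of_int y' - \<alpha>\<bar>
        \<le> real Q1 * (2 * \<bar>e1\<bar>)" using N E by (intro mult_mono) auto
    also have "\<dots> < 2 / real Q1" using e1Q1 by (simp add: algebra_simps)
    also have "\<dots> \<le> 2 * (\<eta> / t)" using invQ1 by simp
    also have "\<dots> < \<epsilon>" using \<eta>Q2 ep by linarith
    finally show ?thesis using d1(1) by blast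
  qed
qed

theorem mainTheorem1:
  fixes m :: nat and \<theta> :: "nat \<Rightarrow> real"
  assumes "m \<ge> 2"
    and "\<exists>i j. 1 \<le> i \<and> i < j \<and> j \<le> m \<and> lin_indep_Q3 1 (\<theta> i) (\<theta> j)"
  shows "\<forall>\<epsilon>>0. \<forall>\<alpha>::real. \<exists>x :: nat \<Rightarrow> int. \<exists>y :: int.
           (\<forall>k. k \<notin> {1..m} \<longrightarrow> x k = 0) \<and> (\<exists>k\<in>{1..m}. x k \<noteq> 0) \<and>
           \<bar>(\<Sum>k=1..m. \<theta> k * of_int (x k)) - of_int y - \<alpha>\<bar>
              = dist_int ((\<Sum>k=1..m. \<theta> k * of_int (x k)) - \<alpha>) \<and>
           dist_int ((\<Sum>k=1..m. \<theta> k * of_int (x k)) - \<alpha>) < \<epsilon> / supnorm m x"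
proof (intro allI impI)
  fix \<epsilon> :: real and \<alpha> :: real
  assume ep: "\<epsilon> > 0"
  obtain i j where ij: "1 \<le> i" "i < j" "j \<le> m" and li: "lin_indep_Q3 1 (\<theta> i) (\<theta> j)"
    using assms(2) by blast
  obtain a b y0 :: int where ab: "a \<noteq> 0 \<or> b \<noteq> 0" and
    pr: "max \<bar>real_of_int a\<bar> \<bar>real_of_int b\<bar> * \<bar>of_int a * \<theta> i + of_int b * \<theta> j - of_int y0 - \<alpha>\<bar> < \<epsilon>"
    using core[OF li ep, of \<alpha>] by blast
  define x where "x = (\<lambda>k. if k = i then a else if k = j then b else 0)"
  have xsplit: "\<theta> k * of_int (x k) = (if k = i then \<theta> i * of_int a else 0) + (if k = j then \<theta> j * of_int b else 0)" for k
    using ij by (auto simp: x_def)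
  have fin: "finite {1..m}" by simp
  have sum_eq: "(\<Sum>k=1..m. \<theta> k * of_int (x k)) = of_int a * \<theta> i + of_int b * \<theta> j"
    unfolding xsplit sum.distrib using ij by (simp add: sum.delta)
  have sn: "supnorm m x = max \<bar>real_of_int a\<bar> \<bar>real_of_int b\<bar>"
    unfolding supnorm_def
  proof (rule Max_eqI)
    show "finite ((\<lambda>k. real_of_int \<bar>x k\<bar>) ` {1..m})" by simp
    show "z \<le> max \<bar>real_of_int a\<bar> \<bar>real_of_int b\<bar>" if "z \<in> (\<lambda>k. real_of_int \<bar>x k\<bar>) ` {1..m}" for z
      using that by (auto simp: x_def)
    show "max \<bar>real_of_int a\<bar> \<bar>real_of_int b\<bar> \<in> (\<lambda>k. real_of_int \<bar>x k\<bar>) ` {1..m}"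
    proof (cases "\<bar>a\<bar> \<le> \<bar>b\<bar>")
      case True
      then have "max \<bar>real_of_int a\<bar> \<bar>real_of_int b\<bar> = real_of_int \<bar>x j\<bar>" using ij by (simp add: x_def)
      then show ?thesis using ij by force
    next
      case False
      then have "max \<bar>real_of_int a\<bar> \<bar>real_of_int b\<bar> = real_of_int \<bar>x i\<bar>" using ij by (simp add: x_def)
      then show ?thesis using ij by force
    qed
  qed
  define w where "w = (\<Sum>k=1..m. \<theta> k * of_int (x k)) - \<alpha>"
  have snp: "supnorm m x > 0" using sn ab by auto
  have d: "dist_int w \<le> \<bar>w - of_int y0\<bar>" by (rule dist_int_le)
  have "\<bar>w - of_int y0\<bar> = \<bar>of_int a * \<theta> i + of_int b * \<theta> j - of_int y0 - \<alpha>\<bar>"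
    unfolding w_def sum_eq by (simp add: algebra_simps)
  then have "supnorm m x * dist_int w < \<epsilon>"
    using pr sn d snp by (smt (verit) mult_left_mono)
  then have dlt: "dist_int w < \<epsilon> / supnorm m x" using snp by (simp add: field_simps)
  show "\<exists>x :: nat \<Rightarrow> int. \<exists>y :: int.
           (\<forall>k. k \<notin> {1..m} \<longrightarrow> x k = 0) \<and> (\<exists>k\<in>{1..m}. x k \<noteq> 0) \<and>
           \<bar>(\<Sum>k=1..m. \<theta> k * of_int (x k)) - of_int y - \<alpha>\<bar>
              = dist_int ((\<Sum>k=1..m. \<theta> k * of_int (x k)) - \<alpha>) \<and>
           dist_int ((\<Sum>k=1..m. \<theta> k * of_int (x k)) - \<alpha>) < \<epsilon> / supnorm m x"
  proof (intro exI conjI)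
    show "\<forall>k. k \<notin> {1..m} \<longrightarrow> x k = 0" using ij by (auto simp: x_def)
    show "\<exists>k\<in>{1..m}. x k \<noteq> 0" using ij ab by (auto simp: x_def)
    show "\<bar>(\<Sum>k=1..m. \<theta> k * of_int (x k)) - of_int (round w) - \<alpha>\<bar>
              = dist_int ((\<Sum>k=1..m. \<theta> k * of_int (x k)) - \<alpha>)"
      unfolding dist_int_round w_def by (simp add: algebra_simps)
    show "dist_int ((\<Sum>k=1..m. \<theta> k * of_int (x k)) - \<alpha>) < \<epsilon> / supnorm m x"
      using dlt by (simp add: w_def)
  qed
qed

end
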